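(* Let $N$ be a smooth positive function on an open interval of $r$-values, let $a$ be a constant such that $F(r)=\int_a^r\frac{1}{N(\mu)}\,\mathrm{d}\mu$ is defined and has a smooth inverse $F^{-1}$ defined on an open interval $I$, and set $b_1(t)=N(F^{-1}(t))$, $b_2(t)=F^{-1}(t)$ for $t\in I$, with $b_2>0$. Consider the $(2+1)$-dimensional Lorentzian multiply warped product $I\times{}_{b_1}F_1\times{}_{b_2}F_2$ with $F_1,F_2$ one-dimensional Riemannian manifolds with coordinates $x,\phi$ and metric $\mathrm{d}s^2=-\mathrm{d}t^2+b_1^2(t)\,\mathrm{d}x^2+b_2^2(t)\,\mathrm{d}\phi^2$. Then this space-time is Einstein with Ricci curvature $\lambda$ if and only if the square lapse function satisfies $N^2(r)=\frac{\lambda}{2}r^2+c_2$ for some constant $c_2$ (that is, $N^2(r)=\frac{\lambda}{2}r^2+c_1r+c_2$ with $c_1=0$).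
   Context: A pseudo-Riemannian manifold $(M,h)$ is Einstein with Ricci curvature $\lambda$ if $\mathrm{Ric}=\lambda h$. *)

theory Defs
  imports "HOL-Analysis.Analysis"
begin

definition smooth_on :: "real set \<Rightarrow> (real \<Rightarrow> real) \<Rightarrow> bool" where
  "smooth_on S f \<longleftrightarrow> (\<forall>k. \<forall>x\<in>S. ((deriv ^^ k) f) differentiable (at x))"

definition pd :: "3 \<Rightarrow> (real^3 \<Rightarrow> real) \<Rightarrow> real^3 \<Rightarrow> real" where
  "pd i f p = deriv (\<lambda>s. f (p + s *\<^sub>R axis i 1)) 0"

definition christoffel :: "(real^3 \<Rightarrow> real^3^3) \<Rightarrow> real^3 \<Rightarrow> 3 \<Rightarrow> 3 \<Rightarrow> 3 \<Rightarrow> real" where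
  "christoffel g p k i j =
     (1/2) * (\<Sum>l\<in>UNIV. matrix_inv (g p) $ k $ l *
        (pd i (\<lambda>q. g q $ j $ l) p + pd j (\<lambda>q. g q $ i $ l) p - pd l (\<lambda>q. g q $ i $ j) p))"

definition ricci :: "(real^3 \<Rightarrow> real^3^3) \<Rightarrow> real^3 \<Rightarrow> 3 \<Rightarrow> 3 \<Rightarrow> real" where
  "ricci g p i j =
     (\<Sum>k\<in>UNIV. pd k (\<lambda>q. christoffel g q k i j) p - pd j (\<lambda>q. christoffel g q k i k) p
        + (\<Sum>l\<in>UNIV. christoffel g p k k l * christoffel g p l i j
                     - christoffel g p k j l * christoffel g p l i k))"

definition einstein_on :: "(real^3) set \<Rightarrow> (real^3 \<Rightarrow> real^3^3) \<Rightarrow> real \<Rightarrow> bool" where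
  "einstein_on U g lam \<longleftrightarrow> (\<forall>p\<in>U. \<forall>i j. ricci g p i j = lam * g p $ i $ j)"

text \<open>Metric -dt^2 + b1(t)^2 dx^2 + b2(t)^2 dphi^2 in coordinates (t,x,phi) = (p$1,p$2,p$3).\<close>
definition mwp_metric :: "(real \<Rightarrow> real) \<Rightarrow> (real \<Rightarrow> real) \<Rightarrow> real^3 \<Rightarrow> real^3^3" where
  "mwp_metric b1 b2 p = (\<chi> i j. if i \<noteq> j then 0 else if i = 1 then -1
        else if i = 2 then (b1 (p$1))\<^sup>2 else (b2 (p$1))\<^sup>2)"

definition signed_integral :: "real \<Rightarrow> real \<Rightarrow> (real \<Rightarrow> real) \<Rightarrow> real" where
  "signed_integral a r f = (if a \<le> r then integral {a..r} f else - integral {r..a} f)"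

end

theory Submission
  imports Defs "HOL-Complex_Analysis.Conformal_Mappings"
begin


lemma matrix_inv_eqI:
  fixes A B :: "real^'n^'n"
  assumes "A ** B = mat 1" "B ** A = mat 1"
  shows "matrix_inv A = B"
proof -
  have ex: "\<exists>A'. A ** A' = mat 1 \<and> A' ** A = mat 1" using assms by blast
  have "A ** matrix_inv A = mat 1 \<and> matrix_inv A ** A = mat 1"
    unfolding matrix_inv_def by (rule someI_ex[OF ex])
  then have "matrix_inv A = matrix_inv A ** (A ** B)" using assms by (simp add: matrix_mul_rid)
  also have "\<dots> = B" using \<open>_ \<and> _\<close> by (simp add: matrix_mul_assoc matrix_mul_lid)
  finally show ?thesis .
qed

definition diag3 :: "real \<Rightarrow> real \<Rightarrow> real \<Rightarrow> real^3^3" where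
  "diag3 x y z = (\<chi> i j. if i \<noteq> j then 0 else if i = 1 then x else if i = 2 then y else z)"

lemma diag3_inv:
  assumes "x \<noteq> 0" "y \<noteq> 0" "z \<noteq> 0"
  shows "matrix_inv (diag3 x y z) = diag3 (1/x) (1/y) (1/z)"
  apply (rule matrix_inv_eqI)
  using assms by (auto simp: diag3_def matrix_matrix_mult_def vec_eq_iff sum_3 mat_def forall_3)

lemma pd_lift:
  "pd i (\<lambda>q. \<phi> (q$1)) p = (if i = 1 then deriv \<phi> (p$1) else 0)"
proof (cases "i = 1")
  case True
  have "deriv (\<lambda>s. \<phi> ((p + s *\<^sub>R axis i 1)$1)) 0 = deriv (\<lambda>s. \<phi> (s + p$1)) 0"
    using True by (simp add: axis_def add.commute)
  also have "\<dots> = deriv \<phi> (p$1)"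
    unfolding deriv_def using DERIV_shift[of \<phi> _ 0 "p$1"] by simp
  finally show ?thesis using True by (simp add: pd_def)
next
  case False
  then show ?thesis by (simp add: pd_def axis_def)
qed



definition Gm :: "(real \<Rightarrow> real) \<Rightarrow> (real \<Rightarrow> real) \<Rightarrow> real \<Rightarrow> real^3^3" where
  "Gm a c t = diag3 (-1) ((a t)\<^sup>2) ((c t)\<^sup>2)"

lemma mwp_Gm: "mwp_metric a c q = Gm a c (q$1)"
  by (simp add: mwp_metric_def Gm_def diag3_def)

definition Cf where
  "Cf a c k i j t = (1/2) * (\<Sum>l\<in>UNIV. matrix_inv (Gm a c t) $ k $ l *
     ((if i = 1 then deriv (\<lambda>s. Gm a c s $ j $ l) t else 0)
    + (if j = 1 then deriv (\<lambda>s. Gm a c s $ i $ l) t else 0)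
    - (if l = 1 then deriv (\<lambda>s. Gm a c s $ i $ j) t else 0)))"

lemma pd_Gm: "pd i (\<lambda>q. mwp_metric a c q $ j $ l) p =
   (if i = 1 then deriv (\<lambda>s. Gm a c s $ j $ l) (p$1) else 0)"
  using pd_lift[of i "\<lambda>s. Gm a c s $ j $ l" p] by (simp add: mwp_Gm)

lemma chr_Cf: "christoffel (mwp_metric a c) q k i j = Cf a c k i j (q$1)"
  unfolding christoffel_def Cf_def pd_Gm by (simp add: mwp_Gm)

lemma pd_Cf: "pd m (\<lambda>q. christoffel (mwp_metric a c) q k i j) p =
   (if m = 1 then deriv (Cf a c k i j) (p$1) else 0)"
  using pd_lift[of m "Cf a c k i j" p] by (simp add: chr_Cf)

lemma ricci_Cf: "ricci (mwp_metric a c) p i j =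
  (\<Sum>k\<in>UNIV. (if k = 1 then deriv (Cf a c k i j) (p$1) else 0)
     - (if j = 1 then deriv (Cf a c k i k) (p$1) else 0)
     + (\<Sum>l\<in>UNIV. Cf a c k k l (p$1) * Cf a c l i j (p$1)
                  - Cf a c k j l (p$1) * Cf a c l i k (p$1)))"
  unfolding ricci_def chr_Cf by (simp add: pd_lift[of _ "Cf a c _ _ _"])

definition Ef where
  "Ef a c a1 c1 k i j t = (if k=1 \<and> i=2 \<and> j=2 then a t*a1 t else if k=1 \<and> i=3 \<and> j=3 then c t*c1 t
     else if k=2 \<and> ((i=1 \<and> j=2) \<or> (i=2 \<and> j=1)) then a1 t/a t
     else if k=3 \<and> ((i=1 \<and> j=3) \<or> (i=3 \<and> j=1)) then c1 t/c t else 0)"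

definition dEf where
  "dEf a c a1 c1 a2 c2 k i j t = (if k=1 \<and> i=2 \<and> j=2 then (a1 t)\<^sup>2 + a t*a2 t
     else if k=1 \<and> i=3 \<and> j=3 then (c1 t)\<^sup>2 + c t*c2 t
     else if k=2 \<and> ((i=1 \<and> j=2) \<or> (i=2 \<and> j=1)) then (a2 t * a t - (a1 t)\<^sup>2)/(a t)\<^sup>2
     else if k=3 \<and> ((i=1 \<and> j=3) \<or> (i=3 \<and> j=1)) then (c2 t * c t - (c1 t)\<^sup>2)/(c t)\<^sup>2 else 0)"

locale wp =
  fixes I :: "real set" and a c a1 c1 a2 c2 :: "real \<Rightarrow> real"
  assumes I_open: "open I"
    and a_pos: "\<And>t. t \<in> I \<Longrightarrow> a t > 0"
    and c_pos: "\<And>t. t \<in> I \<Longrightarrow> c t > 0"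
    and a_d: "\<And>t. t \<in> I \<Longrightarrow> (a has_real_derivative a1 t) (at t)"
    and c_d: "\<And>t. t \<in> I \<Longrightarrow> (c has_real_derivative c1 t) (at t)"
    and a1_d: "\<And>t. t \<in> I \<Longrightarrow> (a1 has_real_derivative a2 t) (at t)"
    and c1_d: "\<And>t. t \<in> I \<Longrightarrow> (c1 has_real_derivative c2 t) (at t)"
begin

lemma dGm: "t \<in> I \<Longrightarrow> deriv (\<lambda>s. Gm a c s $ j $ l) t =
   (if j = 2 \<and> l = 2 then 2 * a t * a1 t else if j = 3 \<and> l = 3 then 2 * c t * c1 t else 0)"
proof -
  assume t: "t \<in> I"
  consider "j = 2 \<and> l = 2" | "j = 3 \<and> l = 3" | "\<not> (j = 2 \<and> l = 2) \<and> \<not> (j = 3 \<and> l = 3)" by blast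
  then show ?thesis
  proof cases
    case 1
    have "((\<lambda>s. (a s)\<^sup>2) has_real_derivative 2 * a t * a1 t) (at t)"
      using DERIV_power[OF a_d[OF t], of 2] by (simp add: power2_eq_square mult_ac)
    then show ?thesis using 1 by (simp add: Gm_def diag3_def DERIV_imp_deriv)
  next
    case 2
    have "((\<lambda>s. (c s)\<^sup>2) has_real_derivative 2 * c t * c1 t) (at t)"
      using DERIV_power[OF c_d[OF t], of 2] by (simp add: power2_eq_square mult_ac)
    then show ?thesis using 2 by (simp add: Gm_def diag3_def DERIV_imp_deriv)
  next
    case 3
    then have "(\<lambda>s. Gm a c s $ j $ l) = (\<lambda>s. if j \<noteq> l then 0 else if j = 1 then -1 else 0)"
      by (auto simp: Gm_def diag3_def fun_eq_iff) (metis exhaust_3)+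
    then show ?thesis using 3 by auto
  qed
qed

lemma Cf_Ef: "t \<in> I \<Longrightarrow> Cf a c k i j t = Ef a c a1 c1 k i j t"
proof -
  assume t: "t \<in> I"
  have inv: "matrix_inv (Gm a c t) = diag3 (-1) (1/(a t)\<^sup>2) (1/(c t)\<^sup>2)"
    unfolding Gm_def using a_pos[OF t] c_pos[OF t] by (subst diag3_inv) auto
  have "\<forall>k i j. Cf a c k i j t = Ef a c a1 c1 k i j t"
    unfolding Cf_def inv dGm[OF t] Ef_def forall_3 using a_pos[OF t] c_pos[OF t]
    by (simp add: diag3_def sum_3 Gm_def power2_eq_square field_simps)
  then show ?thesis by blast
qed


lemma Ef_deriv: "t \<in> I \<Longrightarrow> (Ef a c a1 c1 k i j has_real_derivative dEf a c a1 c1 a2 c2 k i j t) (at t)"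
proof -
  assume t: "t \<in> I"
  note A = a_d[OF t] a1_d[OF t] c_d[OF t] c1_d[OF t] a_pos[OF t] c_pos[OF t]
  have 1: "((\<lambda>s. a s * a1 s) has_real_derivative (a1 t)\<^sup>2 + a t * a2 t) (at t)"
    using DERIV_mult[OF A(1) A(2)] by (simp add: power2_eq_square mult_ac)
  have 2: "((\<lambda>s. c s * c1 s) has_real_derivative (c1 t)\<^sup>2 + c t * c2 t) (at t)"
    using DERIV_mult[OF A(3) A(4)] by (simp add: power2_eq_square mult_ac)
  have 3: "((\<lambda>s. a1 s / a s) has_real_derivative (a2 t * a t - (a1 t)\<^sup>2)/(a t)\<^sup>2) (at t)"
    using DERIV_divide[OF A(2) A(1)] A(5) by (simp add: power2_eq_square mult_ac)
  have 4: "((\<lambda>s. c1 s / c s) has_real_derivative (c2 t * c t - (c1 t)\<^sup>2)/(c t)\<^sup>2) (at t)"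
    using DERIV_divide[OF A(4) A(3)] A(6) by (simp add: power2_eq_square mult_ac)
  show ?thesis
    unfolding Ef_def dEf_def
    using 1 2 3 4 by (auto intro: DERIV_const)
qed

lemma deriv_Cf: "t \<in> I \<Longrightarrow> deriv (Cf a c k i j) t = dEf a c a1 c1 a2 c2 k i j t"
  by (rule DERIV_imp_deriv, rule has_field_derivative_transform_within_open[OF Ef_deriv I_open])
     (auto simp: Cf_Ef)

definition "Rf i j t = (if i = 1 \<and> j = 1 then -(a2 t / a t + c2 t / c t)
   else if i = 2 \<and> j = 2 then a t * a2 t + a t * a1 t * c1 t / c t
   else if i = 3 \<and> j = 3 then c t * c2 t + c t * c1 t * a1 t / a t else 0)"

lemma ricci_Rf: "p$1 \<in> I \<Longrightarrow> ricci (mwp_metric a c) p i j = Rf i j (p$1)"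
proof -
  assume t: "p$1 \<in> I"
  note P = a_pos[OF t] c_pos[OF t]
  have "\<forall>i j. ricci (mwp_metric a c) p i j = Rf i j (p$1)"
    unfolding ricci_Cf deriv_Cf[OF t] Cf_Ef[OF t] forall_3 sum_3 Rf_def
    using P by (simp add: Ef_def dEf_def power2_eq_square field_simps)
  then show ?thesis by blast
qed

end


lemma signed_integral_deriv:
  fixes f :: "real \<Rightarrow> real"
  assumes J: "is_interval J" "open J" and cont: "continuous_on J f" and a: "a \<in> J" and r: "r \<in> J"
  shows "((\<lambda>u. signed_integral a u f) has_real_derivative f r) (at r)"
proof -
  obtain e1 where e1: "e1 > 0" "ball (min a r) e1 \<subseteq> J" using J(2) a r
    by (metis min_def open_contains_ball)
  obtain e2 where e2: "e2 > 0" "ball (max a r) e2 \<subseteq> J" using J(2) a r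
    by (metis max_def open_contains_ball)
  define lo where "lo = min a r - e1/2"
  define hi where "hi = max a r + e2/2"
  have lo: "lo \<in> J" using e1 unfolding lo_def by (auto simp: dist_real_def subset_iff)
  have hi: "hi \<in> J" using e2 unfolding hi_def by (auto simp: dist_real_def subset_iff)
  have sub: "{lo..hi} \<subseteq> J"
  proof
    fix x assume "x \<in> {lo..hi}"
    then show "x \<in> J" using lo hi J(1) unfolding is_interval_1 by (meson atLeastAtMost_iff)
  qed
  have lohi: "lo < min a r" "max a r < hi" using e1 e2 unfolding lo_def hi_def by auto
  have cf: "continuous_on {lo..hi} f" using cont sub continuous_on_subset by blast
  have int: "\<And>x y. lo \<le> x \<Longrightarrow> y \<le> hi \<Longrightarrow> f integrable_on {x..y}"
    by (rule integrable_continuous_real, rule continuous_on_subset[OF cf]) auto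
  have eq: "signed_integral a u f = integral {lo..u} f - integral {lo..a} f" if u: "u \<in> {lo<..<hi}" for u
  proof (cases "a \<le> u")
    case True
    have "integral {lo..a} f + integral {a..u} f = integral {lo..u} f"
      by (rule Henstock_Kurzweil_Integration.integral_combine) (use True u lohi int in auto)
    then show ?thesis using True by (simp add: signed_integral_def)
  next
    case False
    have "integral {lo..u} f + integral {u..a} f = integral {lo..a} f"
      by (rule Henstock_Kurzweil_Integration.integral_combine) (use False u lohi int in auto)
    then show ?thesis using False by (simp add: signed_integral_def)
  qed
  have "((\<lambda>u. integral {lo..u} f) has_real_derivative f r) (at r within {lo..hi})"
    by (rule integral_has_real_derivative[OF cf]) (use lohi in auto)
  then have "((\<lambda>u. integral {lo..u} f) has_real_derivative f r) (at r within {lo<..<hi})"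
    by (rule DERIV_subset) auto
  then have "((\<lambda>u. integral {lo..u} f) has_real_derivative f r) (at r)"
    using at_within_open[of r "{lo<..<hi}"] lohi by auto
  then have "((\<lambda>u. integral {lo..u} f - integral {lo..a} f) has_real_derivative f r) (at r)"
    using DERIV_diff[OF _ DERIV_const[of "integral {lo..a} f" "at r"]] by simp
  then show ?thesis
    by (rule has_field_derivative_transform_within_open[of _ _ _ "{lo<..<hi}"]) (use lohi eq in auto)
qed


lemma main_equiv:
  fixes N :: "real \<Rightarrow> real" and J :: "real set" and a lam :: real
    and F Finv b1 b2 :: "real \<Rightarrow> real" and I :: "real set"
  assumes J_interval: "is_interval J" "open J" "J \<noteq> {}"
    and N_smooth: "smooth_on J N"
    and N_pos: "\<forall>r\<in>J. N r > 0"
    and a_in: "a \<in> J"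
    and F_def: "F = (\<lambda>r. signed_integral a r (\<lambda>\<mu>. 1 / N \<mu>))"
    and I_def: "I = F ` J"
    and Finv_def: "Finv = inv_into J F"
    and b1_def: "b1 = (\<lambda>t. N (Finv t))"
    and b2_def: "b2 = (\<lambda>t. Finv t)"
    and b2_pos: "\<forall>t\<in>I. b2 t > 0"
  shows "einstein_on {p. p$1 \<in> I} (mwp_metric b1 b2) lam
         \<longleftrightarrow> (\<exists>c2. \<forall>r\<in>J. (N r)\<^sup>2 = lam / 2 * r\<^sup>2 + c2)"
proof -
  define N1 where "N1 = deriv N"
  define N2 where "N2 = deriv N1"
  have dN: "(N has_real_derivative N1 r) (at r)" if "r \<in> J" for r
  proof -
    have "((deriv ^^ 0) N) differentiable (at r)" using N_smooth that unfolding smooth_on_def by blast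
    then show ?thesis unfolding N1_def by (simp add: DERIV_deriv_iff_real_differentiable)
  qed
  have dN1: "(N1 has_real_derivative N2 r) (at r)" if "r \<in> J" for r
  proof -
    have "((deriv ^^ 1) N) differentiable (at r)" using N_smooth that unfolding smooth_on_def by blast
    then show ?thesis unfolding N2_def N1_def by (simp add: DERIV_deriv_iff_real_differentiable)
  qed
  have contN: "continuous_on J N"
    using dN by (meson DERIV_isCont continuous_at_imp_continuous_on)
  have contf: "continuous_on J (\<lambda>\<mu>. 1 / N \<mu>)"
    by (rule continuous_on_divide[OF continuous_on_const contN]) (use N_pos in auto)
  have dF: "(F has_real_derivative 1 / N r) (at r)" if "r \<in> J" for r
    unfolding F_def by (rule signed_integral_deriv[OF J_interval(1,2) contf a_in that])
  have mono: "F x < F y" if "x \<in> J" "y \<in> J" "x < y" for x y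
  proof (rule DERIV_pos_imp_increasing[OF \<open>x < y\<close>])
    fix z assume "x \<le> z" "z \<le> y"
    then have "z \<in> J" using that J_interval(1) unfolding is_interval_1 by blast
    then show "\<exists>d. (F has_real_derivative d) (at z) \<and> d > 0"
      using dF[OF \<open>z \<in> J\<close>] N_pos \<open>z \<in> J\<close> by auto
  qed
  have inj: "inj_on F J"
  proof (rule inj_onI)
    fix x y assume "x \<in> J" "y \<in> J" "F x = F y"
    then show "x = y" using mono[of x y] mono[of y x] by (metis linorder_neq_iff less_irrefl)
  qed
  have contF: "continuous_on J F"
    using dF by (meson DERIV_isCont continuous_at_imp_continuous_on)
  have I_open: "open I" unfolding I_def by (rule invariance_of_domain[OF contF J_interval(2) inj])
  have FF: "Finv t \<in> J" "F (Finv t) = t" if "t \<in> I" for t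
    using that unfolding Finv_def I_def by (auto simp: inv_into_into f_inv_into_f)
  have FF2: "Finv (F r) = r" if "r \<in> J" for r
    using that inj by (simp add: Finv_def)
  have rpos: "r > 0" if "r \<in> J" for r
    using b2_pos FF2[OF that] that unfolding I_def b2_def by force
  have dFinv: "(Finv has_real_derivative N (Finv t)) (at t)" if "t \<in> I" for t
  proof -
    have "(Finv has_real_derivative inverse (1 / N (Finv t))) (at (F (Finv t)))"
      by (rule has_field_derivative_inverse_strong[OF dF[OF FF(1)[OF that]] _ J_interval(2) FF(1)[OF that] contF FF2])
         (use N_pos FF(1)[OF that] in auto)
    then show ?thesis using FF(2)[OF that] by simp
  qed
  define P where "P r = N1 r * N r" for r
  define dP where "dP r = N2 r * N r + N1 r * N1 r" for r
  have dPd: "(P has_real_derivative dP r) (at r)" if "r \<in> J" for r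
    unfolding P_def[abs_def] dP_def using DERIV_mult[OF dN1[OF that] dN[OF that]]
    by (simp add: mult_ac)
  define a1 where "a1 t = P (Finv t)" for t
  define a2 where "a2 t = dP (Finv t) * N (Finv t)" for t
  have b1d: "(b1 has_real_derivative a1 t) (at t)" if "t \<in> I" for t
    unfolding b1_def a1_def P_def using DERIV_chain2[OF dN[OF FF(1)[OF that]] dFinv[OF that]] by simp
  interpret W: wp I b1 b2 a1 b1 a2 a1
  proof
    show "open I" by (fact I_open)
    show "b1 t > 0" if "t \<in> I" for t using N_pos FF(1)[OF that] b1_def by simp
    show "b2 t > 0" if "t \<in> I" for t using b2_pos that by simp
    show "(b1 has_real_derivative a1 t) (at t)" if "t \<in> I" for t using b1d that .
    show "(b2 has_real_derivative b1 t) (at t)" if "t \<in> I" for t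
      unfolding b2_def b1_def using dFinv[OF that] by simp
    show "(a1 has_real_derivative a2 t) (at t)" if "t \<in> I" for t
      unfolding a1_def[abs_def] a2_def using DERIV_chain2[OF dPd[OF FF(1)[OF that]] dFinv[OF that]] by simp
  qed
  have ein: "einstein_on {p. p$1 \<in> I} (mwp_metric b1 b2) lam \<longleftrightarrow>
      (\<forall>t\<in>I. \<forall>i j. W.Rf i j t = lam * Gm b1 b2 t $ i $ j)"
  proof
    assume H: "einstein_on {p. p$1 \<in> I} (mwp_metric b1 b2) lam"
    show "\<forall>t\<in>I. \<forall>i j. W.Rf i j t = lam * Gm b1 b2 t $ i $ j"
    proof (intro ballI allI)
      fix t i j assume t: "t \<in> I"
      define p :: "real^3" where "p = (\<chi> _. t)"
      have p1: "p$1 = t" by (simp add: p_def)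
      have "ricci (mwp_metric b1 b2) p i j = lam * mwp_metric b1 b2 p $ i $ j"
        using H t p1 unfolding einstein_on_def by auto
      then show "W.Rf i j t = lam * Gm b1 b2 t $ i $ j"
        using W.ricci_Rf[of p i j] t p1 by (simp add: mwp_Gm)
    qed
  next
    assume H: "\<forall>t\<in>I. \<forall>i j. W.Rf i j t = lam * Gm b1 b2 t $ i $ j"
    show "einstein_on {p. p$1 \<in> I} (mwp_metric b1 b2) lam"
      unfolding einstein_on_def using H W.ricci_Rf by (simp add: mwp_Gm)
  qed
  have pert: "(\<forall>i j. W.Rf i j t = lam * Gm b1 b2 t $ i $ j) \<longleftrightarrow>
      (dP (Finv t) + P (Finv t) / Finv t = lam \<and> 2 * P (Finv t) = lam * Finv t)" if t: "t \<in> I" for t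
  proof -
    define r where "r = Finv t"
    define n where "n = N r"
    have r: "r \<in> J" "r > 0" using FF(1)[OF t] rpos unfolding r_def by auto
    have n: "n > 0" using N_pos r unfolding n_def by auto
    have "(\<forall>i j. W.Rf i j t = lam * Gm b1 b2 t $ i $ j) \<longleftrightarrow>
       (-(dP r * n / n + P r / r) = - lam \<and> n * (dP r * n) + n * P r * n / r = lam * n\<^sup>2
        \<and> r * P r + r * n * P r / n = lam * r\<^sup>2)"
      unfolding forall_3 W.Rf_def Gm_def diag3_def
      by (simp add: a1_def a2_def b1_def b2_def r_def[symmetric] n_def[symmetric])
    also have "\<dots> \<longleftrightarrow> (dP r + P r / r = lam \<and> 2 * P r = lam * r)"
    proof -
      have e1: "-(dP r * n / n + P r / r) = - (dP r + P r / r)" using n by simp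
      have e2: "n * (dP r * n) + n * P r * n / r = n\<^sup>2 * (dP r + P r / r)"
        using r by (simp add: field_simps power2_eq_square)
      have e3: "r * P r + r * n * P r / n = r * (2 * P r)" using n by simp
      have e4: "r * (2 * P r) = lam * r\<^sup>2 \<longleftrightarrow> 2 * P r = lam * r"
        using r by (simp add: power2_eq_square)
      show ?thesis unfolding e1 e2 e3 e4 using n by auto
    qed
    finally show ?thesis unfolding r_def .
  qed
  have step2: "(\<forall>t\<in>I. \<forall>i j. W.Rf i j t = lam * Gm b1 b2 t $ i $ j) \<longleftrightarrow>
      (\<forall>r\<in>J. dP r + P r / r = lam \<and> 2 * P r = lam * r)"
    using pert FF FF2 unfolding I_def by auto
  have step3: "(\<forall>r\<in>J. dP r + P r / r = lam \<and> 2 * P r = lam * r) \<longleftrightarrow> (\<forall>r\<in>J. 2 * P r = lam * r)"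
  proof
    assume "\<forall>r\<in>J. dP r + P r / r = lam \<and> 2 * P r = lam * r"
    then show "\<forall>r\<in>J. 2 * P r = lam * r" by blast
  next
    assume H: "\<forall>r\<in>J. 2 * P r = lam * r"
    show "\<forall>r\<in>J. dP r + P r / r = lam \<and> 2 * P r = lam * r"
    proof
      fix r assume r: "r \<in> J"
      have Hr: "2 * P r = lam * r" using H r by blast
      have "((\<lambda>s. lam / 2 * s) has_real_derivative lam / 2) (at r)"
        by (auto intro!: derivative_eq_intros)
      moreover have "lam / 2 * x = P x" if "x \<in> J" for x
      proof -
        have "2 * P x = lam * x" using H that by blast
        then show ?thesis by linarith
      qed
      ultimately have "(P has_real_derivative lam / 2) (at r)"
        by (rule has_field_derivative_transform_within_open[OF _ J_interval(2) r])
      then have "dP r = lam / 2" using dPd[OF r] DERIV_unique by blast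
      moreover have "P r / r = lam / 2"
      proof -
        have "P r = lam / 2 * r" using Hr by linarith
        then show ?thesis using rpos[OF r] by simp
      qed
      ultimately have "dP r + P r / r = lam" by linarith
      then show "dP r + P r / r = lam \<and> 2 * P r = lam * r" using Hr by blast
    qed
  qed
  have dsq: "((\<lambda>x. (N x)\<^sup>2) has_real_derivative 2 * N x * N1 x) (at x)" if x: "x \<in> J" for x
    using DERIV_power[OF dN[OF x], of 2] by (simp add: power2_eq_square mult_ac)
  have dq: "((\<lambda>x. lam / 2 * x\<^sup>2) has_real_derivative lam * x) (at x)" for x
    using DERIV_cmult[OF DERIV_pow[of 2 x], of "lam / 2"] by simp
  have step4: "(\<forall>r\<in>J. 2 * P r = lam * r) \<longleftrightarrow> (\<exists>c2. \<forall>r\<in>J. (N r)\<^sup>2 = lam / 2 * r\<^sup>2 + c2)"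
  proof
    assume H: "\<forall>r\<in>J. 2 * P r = lam * r"
    have "\<exists>c. \<forall>x\<in>J. (N x)\<^sup>2 - lam / 2 * x\<^sup>2 = c"
    proof (rule has_field_derivative_zero_constant)
      show "convex J" using J_interval(1) is_interval_convex_1 by blast
      fix x assume x: "x \<in> J"
      have d: "((\<lambda>x. (N x)\<^sup>2 - lam / 2 * x\<^sup>2) has_real_derivative 2 * N x * N1 x - lam * x) (at x)"
        by (rule DERIV_diff[OF dsq[OF x] dq])
      have "2 * P x = lam * x" using H x by blast
      then have "2 * N x * N1 x - lam * x = 0" unfolding P_def by (simp add: algebra_simps)
      then have "((\<lambda>x. (N x)\<^sup>2 - lam / 2 * x\<^sup>2) has_real_derivative 0) (at x)" using d by simp
      then show "((\<lambda>x. (N x)\<^sup>2 - lam / 2 * x\<^sup>2) has_real_derivative 0) (at x within J)"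
        by (rule has_field_derivative_at_within)
    qed
    then obtain c where c: "\<forall>x\<in>J. (N x)\<^sup>2 - lam / 2 * x\<^sup>2 = c" by blast
    show "\<exists>c2. \<forall>r\<in>J. (N r)\<^sup>2 = lam / 2 * r\<^sup>2 + c2"
    proof (intro exI ballI)
      fix r assume "r \<in> J"
      then have "(N r)\<^sup>2 - lam / 2 * r\<^sup>2 = c" using c by blast
      then show "(N r)\<^sup>2 = lam / 2 * r\<^sup>2 + c" by linarith
    qed
  next
    assume "\<exists>c2. \<forall>r\<in>J. (N r)\<^sup>2 = lam / 2 * r\<^sup>2 + c2"
    then obtain c2 where H: "\<forall>r\<in>J. (N r)\<^sup>2 = lam / 2 * r\<^sup>2 + c2" by blast
    show "\<forall>r\<in>J. 2 * P r = lam * r"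
    proof
      fix r assume r: "r \<in> J"
      have "((\<lambda>x. lam / 2 * x\<^sup>2 + c2) has_real_derivative lam * r + 0) (at r)"
        by (rule DERIV_add[OF dq DERIV_const])
      moreover have "lam / 2 * x\<^sup>2 + c2 = (N x)\<^sup>2" if "x \<in> J" for x
        using H that by metis
      ultimately have "((\<lambda>x. (N x)\<^sup>2) has_real_derivative lam * r + 0) (at r)"
        by (rule has_field_derivative_transform_within_open[OF _ J_interval(2) r])
      then have "2 * N r * N1 r = lam * r" using dsq[OF r] DERIV_unique by fastforce
      then show "2 * P r = lam * r" unfolding P_def by (simp add: algebra_simps)
    qed
  qed
  show ?thesis using ein step2 step3 step4 by simp
qed


theorem proposition6p1:
  fixes N :: "real \<Rightarrow> real" and J :: "real set" and a lam :: real
    and F Finv b1 b2 :: "real \<Rightarrow> real" and I :: "real set"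
  assumes J_interval: "is_interval J" "open J" "J \<noteq> {}"
    and N_smooth: "smooth_on J N"
    and N_pos: "\<forall>r\<in>J. N r > 0"
    and a_in: "a \<in> J"
    and F_def: "F = (\<lambda>r. signed_integral a r (\<lambda>\<mu>. 1 / N \<mu>))"
    and I_def: "I = F ` J"
    and Finv_def: "Finv = inv_into J F"
    and b1_def: "b1 = (\<lambda>t. N (Finv t))"
    and b2_def: "b2 = (\<lambda>t. Finv t)"
    and b2_pos: "\<forall>t\<in>I. b2 t > 0"
  shows "einstein_on {p. p$1 \<in> I} (mwp_metric b1 b2) lam
         \<longleftrightarrow> (\<exists>c2. \<forall>r\<in>J. (N r)\<^sup>2 = lam / 2 * r\<^sup>2 + c2)"
  by (rule main_equiv[OF assms])

end
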